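(* The linear map $C:\Lambda^\infty\mathbb V\to\Lambda^\infty\mathbb W$ defined by $C(|\lambda\rangle)=|\lambda'_*\rangle$ for every partition $\lambda$ (with conjugate partition $\lambda'$) is an isomorphism of $\mathcal U$-modules.
   Context: $\mathcal U=U_q(\mathfrak{sl}(\infty))$ is the $\mathbb Q(q)$-algebra generated by $E_a,F_a,K_{a,a+1}^{\pm1}$ ($a\in\mathbb Z$), the subalgebra generated by $E_a,F_a,K_{a,a+1}=K_aK_{a+1}^{-1}$ in the standard quantum group $U_q(\mathfrak{gl}(\infty))$ with generators $E_a,F_a,K_a^{\pm1}$. $\Lambda^\infty\mathbb V$ is the $\mathcal U$-module with basis $v_{a_1}\wedge v_{a_2}\wedge\cdots$ ($a_1>a_2>\cdots$ integers, $a_i=1-i$ for $i\gg0$) where, on a basis vector with index set $S=\{a_1,a_2,\dots\}$: $F_a$ replaces the index $a$ by $a+1$ if $a\in S$, $a+1\notin S$, and gives $0$ otherwise; $E_a$ replaces $a+1$ by $a$ if $a+1\in S$, $a\notin S$, and gives $0$ otherwise; $K_{a,a+1}$ acts by $q^{[a\in S]-[a+1\in S]}$. $\Lambda^\infty\mathbb W$ is the $\mathcal U$-module with basis $w_{b_1}\wedge w_{b_2}\wedge\cdots$ ($b_1<b_2<\cdots$, $b_i=i$ for $i\gg0$) where, for index set $S$: $F_a$ replaces $a+1$ by $a$ if $a+1\in S,a\notin S$ (else $0$); $E_a$ replaces $a$ by $a+1$ if $a\in S,a+1\notin S$ (else $0$); $K_{a,a+1}$ acts by $q^{[a+1\in S]-[a\in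 S]}$. (These are the semi-infinite $q$-wedge spaces of the natural module $\mathbb V$ and its dual $\mathbb W$.) For a partition $\lambda=(\lambda_1,\lambda_2,\dots)$ with conjugate $\lambda'$, $|\lambda\rangle=v_{\lambda_1}\wedge v_{\lambda_2-1}\wedge v_{\lambda_3-2}\wedge\cdots$ and $|\lambda'_*\rangle=w_{1-\lambda'_1}\wedge w_{2-\lambda'_2}\wedge w_{3-\lambda'_3}\wedge\cdots$. *)

theory Defs
  imports "HOL-Computational_Algebra.Polynomial" "HOL-Computational_Algebra.Fraction_Field"
begin

type_synonym Qq = "rat poly fract"

definition qq :: Qq where "qq = Fract [:0, 1:] 1"

text \<open>Basis vectors are indexed by their (infinite) index sets S of integers.\<close>

text \<open>Index sets v_{a_1} ^ v_{a_2} ^ ... with a_1 > a_2 > ..., a_i = 1 - i for i large.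
  0-based: a i stands for a_{i+1}, so a i = - i eventually.\<close>
definition VIdx :: "int set \<Rightarrow> bool" where
  "VIdx S \<longleftrightarrow> (\<exists>a :: nat \<Rightarrow> int. (\<forall>i. a (Suc i) < a i)
      \<and> (\<exists>N. \<forall>i\<ge>N. a i = - int i) \<and> S = range a)"

text \<open>Index sets w_{b_1} ^ w_{b_2} ^ ... with b_1 < b_2 < ..., b_i = i for i large.
  0-based: b i stands for b_{i+1}, so b i = i + 1 eventually.\<close>
definition WIdx :: "int set \<Rightarrow> bool" where
  "WIdx S \<longleftrightarrow> (\<exists>b :: nat \<Rightarrow> int. (\<forall>i. b i < b (Suc i))
      \<and> (\<exists>N. \<forall>i\<ge>N. b i = int i + 1) \<and> S = range b)"

definition LV :: "(int set \<Rightarrow> Qq) set" where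
  "LV = {x. finite {S. x S \<noteq> 0} \<and> (\<forall>S. x S \<noteq> 0 \<longrightarrow> VIdx S)}"

definition LW :: "(int set \<Rightarrow> Qq) set" where
  "LW = {x. finite {S. x S \<noteq> 0} \<and> (\<forall>S. x S \<noteq> 0 \<longrightarrow> WIdx S)}"

definition bvec :: "int set \<Rightarrow> int set \<Rightarrow> Qq" where
  "bvec S = (\<lambda>T. if T = S then 1 else 0)"

definition ind :: "bool \<Rightarrow> int" where "ind P = (if P then 1 else 0)"

definition FV :: "int \<Rightarrow> (int set \<Rightarrow> Qq) \<Rightarrow> (int set \<Rightarrow> Qq)" where
  "FV a x = (\<lambda>T. if a + 1 \<in> T \<and> a \<notin> T then x (insert a (T - {a + 1})) else 0)"
  \<comment> \<open>F_a replaces index a by a+1\<close>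
definition EV :: "int \<Rightarrow> (int set \<Rightarrow> Qq) \<Rightarrow> (int set \<Rightarrow> Qq)" where
  "EV a x = (\<lambda>T. if a \<in> T \<and> a + 1 \<notin> T then x (insert (a + 1) (T - {a})) else 0)"
  \<comment> \<open>E_a replaces index a+1 by a\<close>
definition KV :: "int \<Rightarrow> (int set \<Rightarrow> Qq) \<Rightarrow> (int set \<Rightarrow> Qq)" where
  "KV a x = (\<lambda>T. qq powi (ind (a \<in> T) - ind (a + 1 \<in> T)) * x T)"
definition KinvV :: "int \<Rightarrow> (int set \<Rightarrow> Qq) \<Rightarrow> (int set \<Rightarrow> Qq)" where
  "KinvV a x = (\<lambda>T. qq powi (- (ind (a \<in> T) - ind (a + 1 \<in> T))) * x T)"

definition FW :: "int \<Rightarrow> (int set \<Rightarrow> Qq) \<Rightarrow> (int set \<Rightarrow> Qq)" where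
  "FW a x = (\<lambda>T. if a \<in> T \<and> a + 1 \<notin> T then x (insert (a + 1) (T - {a})) else 0)"
  \<comment> \<open>F_a replaces index a+1 by a\<close>
definition EW :: "int \<Rightarrow> (int set \<Rightarrow> Qq) \<Rightarrow> (int set \<Rightarrow> Qq)" where
  "EW a x = (\<lambda>T. if a + 1 \<in> T \<and> a \<notin> T then x (insert a (T - {a + 1})) else 0)"
  \<comment> \<open>E_a replaces index a by a+1\<close>
definition KW :: "int \<Rightarrow> (int set \<Rightarrow> Qq) \<Rightarrow> (int set \<Rightarrow> Qq)" where
  "KW a x = (\<lambda>T. qq powi (ind (a + 1 \<in> T) - ind (a \<in> T)) * x T)"
definition KinvW :: "int \<Rightarrow> (int set \<Rightarrow> Qq) \<Rightarrow> (int set \<Rightarrow> Qq)" where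
  "KinvW a x = (\<lambda>T. qq powi (- (ind (a + 1 \<in> T) - ind (a \<in> T))) * x T)"

text \<open>Partitions as weakly decreasing, eventually zero sequences (0-based: lam i = lambda_{i+1}).\<close>
definition partition :: "(nat \<Rightarrow> nat) \<Rightarrow> bool" where
  "partition lam \<longleftrightarrow> (\<forall>i. lam (Suc i) \<le> lam i) \<and> (\<exists>N. \<forall>i\<ge>N. lam i = 0)"

text \<open>Conjugate partition, 0-based: conjp lam j = lambda'_{j+1} = #{i : lambda_i >= j+1}.\<close>
definition conjp :: "(nat \<Rightarrow> nat) \<Rightarrow> nat \<Rightarrow> nat" where
  "conjp lam j = card {i. j < lam i}"

text \<open>|lambda> = v_{lambda_1} ^ v_{lambda_2 - 1} ^ ...: index set {lambda_{i+1} - i}.\<close>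
definition ketV :: "(nat \<Rightarrow> nat) \<Rightarrow> int set" where
  "ketV lam = range (\<lambda>i. int (lam i) - int i)"

text \<open>|lambda'_*> = w_{1-lambda'_1} ^ w_{2-lambda'_2} ^ ...: index set {(j+1) - lambda'_{j+1}}.\<close>
definition ketW :: "(nat \<Rightarrow> nat) \<Rightarrow> int set" where
  "ketW lam = range (\<lambda>j. int j + 1 - int (conjp lam j))"

definition is_C :: "((int set \<Rightarrow> Qq) \<Rightarrow> (int set \<Rightarrow> Qq)) \<Rightarrow> bool" where
  "is_C C \<longleftrightarrow> C ` LV \<subseteq> LW
     \<and> (\<forall>x\<in>LV. \<forall>y\<in>LV. C (\<lambda>S. x S + y S) = (\<lambda>T. C x T + C y T))
     \<and> (\<forall>c. \<forall>x\<in>LV. C (\<lambda>S. c * x S) = (\<lambda>T. c * C x T))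
     \<and> (\<forall>lam. partition lam \<longrightarrow> C (bvec (ketV lam)) = bvec (ketW lam))"

text \<open>Isomorphism of U-modules: bijective and commuting with all generators
  E_a, F_a, K_{a,a+1}, K_{a,a+1}^{-1} (these generate U).\<close>
definition U_iso :: "((int set \<Rightarrow> Qq) \<Rightarrow> (int set \<Rightarrow> Qq)) \<Rightarrow> bool" where
  "U_iso C \<longleftrightarrow> bij_betw C LV LW
     \<and> (\<forall>a. \<forall>x\<in>LV. C (EV a x) = EW a (C x))
     \<and> (\<forall>a. \<forall>x\<in>LV. C (FV a x) = FW a (C x))
     \<and> (\<forall>a. \<forall>x\<in>LV. C (KV a x) = KW a (C x))
     \<and> (\<forall>a. \<forall>x\<in>LV. C (KinvV a x) = KinvW a (C x))"

end

theory Submission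
  imports Defs
begin

lemma anti_le:
  assumes "\<And>i. (f::nat \<Rightarrow> 'a::order) (Suc i) \<le> f i" "i \<le> j"
  shows "f j \<le> f i"
  using lift_Suc_antimono_le[of f i j] assms by blast

lemma anti_less:
  assumes "\<And>i. (f::nat \<Rightarrow> int) (Suc i) < f i" "i < j"
  shows "f j < f i"
  using lift_Suc_mono_less[of "\<lambda>i. - f i" i j] assms by auto

lemma anti_inj:
  assumes "\<And>i. (f::nat \<Rightarrow> int) (Suc i) < f i"
  shows "inj f"
proof (rule injI)
  fix i j assume "f i = f j"
  thus "i = j" using anti_less[of f, OF assms, of i j] anti_less[of f, OF assms, of j i]
    by (metis less_irrefl nat_neq_iff)
qed

lemma part_le: "partition lam \<Longrightarrow> i \<le> j \<Longrightarrow> lam j \<le> lam i"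
  unfolding partition_def using anti_le[of lam i j] by blast

lemma conj_set:
  assumes p: "partition lam"
  shows "{i. j < lam i} = {..< conjp lam j}"
proof -
  from p obtain N where N: "\<forall>i\<ge>N. lam i = 0" unfolding partition_def by blast
  define c where "c = (LEAST k. lam k \<le> j)"
  have ex: "lam N \<le> j" using N by simp
  have c1: "lam c \<le> j" unfolding c_def using ex by (rule LeastI)
  have eq: "{i. j < lam i} = {..<c}"
  proof (intro set_eqI iffI)
    fix i assume "i \<in> {i. j < lam i}"
    hence "\<not> lam i \<le> j" by simp
    show "i \<in> {..<c}" proof (rule ccontr)
      assume "i \<notin> {..<c}" hence "c \<le> i" by simp
      hence "lam i \<le> lam c" using part_le[OF p] by blast
      thus False using c1 \<open>\<not> lam i \<le> j\<close> by simp
    qed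
  next
    fix i assume "i \<in> {..<c}" hence "i < c" by simp
    hence "\<not> lam i \<le> j" unfolding c_def by (rule not_less_Least)
    thus "i \<in> {i. j < lam i}" by simp
  qed
  have "conjp lam j = c" unfolding conjp_def eq by simp
  with eq show ?thesis by simp
qed

lemma conj_iff: "partition lam \<Longrightarrow> (i < conjp lam j) = (j < lam i)"
  using conj_set[of lam j] by blast

lemma partition_conjp:
  assumes p: "partition lam" shows "partition (conjp lam)"
  unfolding partition_def
proof (intro conjI allI exI[of _ "lam 0"] impI)
  fix j
  show "conjp lam (Suc j) \<le> conjp lam j"
  proof (rule ccontr)
    assume "\<not> conjp lam (Suc j) \<le> conjp lam j"
    hence "conjp lam j < conjp lam (Suc j)" by simp
    hence "Suc j < lam (conjp lam j)" using conj_iff[OF p] by blast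
    hence "conjp lam j < conjp lam j" using conj_iff[OF p, of "conjp lam j" j] by simp
    thus False by simp
  qed
next
  fix j assume "lam 0 \<le> j"
  hence "\<forall>i. lam i \<le> j" using part_le[OF p, of 0] by (meson le0 le_trans)
  hence "{i. j < lam i} = {}" by (auto simp: not_less[symmetric])
  thus "conjp lam j = 0" unfolding conjp_def by simp
qed

lemma ketW_compl:
  assumes p: "partition lam" shows "ketW lam = - ketV lam"
proof (intro set_eqI iffI)
  fix n assume "n \<in> ketW lam"
  then obtain j where nj: "n = int j + 1 - int (conjp lam j)" unfolding ketW_def by auto
  show "n \<in> - ketV lam"
  proof
    assume "n \<in> ketV lam"
    then obtain i where ni: "n = int (lam i) - int i" unfolding ketV_def by auto
    show False
    proof (cases "i < conjp lam j")
      case True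
      hence "j < lam i" using conj_iff[OF p] by blast
      thus False using ni nj True by linarith
    next
      case False
      hence "\<not> j < lam i" using conj_iff[OF p] by blast
      thus False using ni nj False by linarith
    qed
  qed
next
  fix n assume "n \<in> - ketV lam"
  hence nn: "\<And>i. n \<noteq> int (lam i) - int i" unfolding ketV_def by auto
  define f where "f i = int (lam i) - int i" for i
  define c where "c = (LEAST k. f k \<le> n)"
  have ex: "f (nat (int (lam 0) - n)) \<le> n"
    using part_le[OF p, of 0 "nat (int (lam 0) - n)"] unfolding f_def by linarith
  have c1: "f c \<le> n" unfolding c_def using ex by (rule LeastI)
  have c2: "f c < n" using c1 nn[of c] unfolding f_def by linarith
  have c3: "\<And>k. k < c \<Longrightarrow> n < f k" unfolding c_def using not_less_Least by fastforce
  have jpos: "n + int c - 1 \<ge> 0" using c2 unfolding f_def by linarith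
  define j where "j = nat (n + int c - 1)"
  have eq: "{i. j < lam i} = {..<c}"
  proof (intro set_eqI iffI)
    fix i assume "i \<in> {i. j < lam i}"
    hence "j < lam i" by simp
    show "i \<in> {..<c}" proof (rule ccontr)
      assume "i \<notin> {..<c}" hence "c \<le> i" by simp
      hence "lam i \<le> lam c" using part_le[OF p] by blast
      thus False using c2 \<open>j < lam i\<close> jpos unfolding f_def j_def by linarith
    qed
  next
    fix i assume "i \<in> {..<c}" hence ic: "i < c" by simp
    hence "lam (c - 1) \<le> lam i" using part_le[OF p, of i "c - 1"] by simp
    moreover have "n < f (c - 1)" using c3 ic by simp
    ultimately show "i \<in> {i. j < lam i}" using ic jpos unfolding f_def j_def by simp
  qed
  have "conjp lam j = c" unfolding conjp_def eq by simp
  hence "n = int j + 1 - int (conjp lam j)" using jpos unfolding j_def by simp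
  thus "n \<in> ketW lam" unfolding ketW_def by auto
qed

lemma ketV_conj_compl:
  assumes p: "partition mu"
  shows "- range (\<lambda>i. int i + 1 - int (mu i)) = ketV (conjp mu)"
proof (intro set_eqI iffI)
  fix n assume "n \<in> ketV (conjp mu)"
  then obtain j where nj: "n = int (conjp mu j) - int j" unfolding ketV_def by auto
  show "n \<in> - range (\<lambda>i. int i + 1 - int (mu i))"
  proof
    assume "n \<in> range (\<lambda>i. int i + 1 - int (mu i))"
    then obtain i where ni: "n = int i + 1 - int (mu i)" by auto
    show False
    proof (cases "i < conjp mu j")
      case True
      hence "j < mu i" using conj_iff[OF p] by blast
      thus False using ni nj True by linarith
    next
      case False
      hence "\<not> j < mu i" using conj_iff[OF p] by blast
      thus False using ni nj False by linarith
    qed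
  qed
next
  fix n assume "n \<in> - range (\<lambda>i. int i + 1 - int (mu i))"
  hence nn: "\<And>i. n \<noteq> int i + 1 - int (mu i)" by auto
  define g where "g i = int i + 1 - int (mu i)" for i
  define c where "c = (LEAST k. n \<le> g k)"
  have ex: "n \<le> g (nat (n + int (mu 0)))"
    using part_le[OF p, of 0 "nat (n + int (mu 0))"] unfolding g_def by linarith
  have c1: "n \<le> g c" unfolding c_def using ex by (rule LeastI)
  have c2: "n < g c" using c1 nn[of c] unfolding g_def by linarith
  have c3: "\<And>k. k < c \<Longrightarrow> g k < n" unfolding c_def using not_less_Least by fastforce
  have jpos: "int c - n \<ge> 0" using c2 unfolding g_def by linarith
  define j where "j = nat (int c - n)"
  have eq: "{i. j < mu i} = {..<c}"
  proof (intro set_eqI iffI)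
    fix i assume "i \<in> {i. j < mu i}"
    hence "j < mu i" by simp
    show "i \<in> {..<c}" proof (rule ccontr)
      assume "i \<notin> {..<c}" hence "c \<le> i" by simp
      hence "mu i \<le> mu c" using part_le[OF p] by blast
      thus False using c2 \<open>j < mu i\<close> jpos unfolding g_def j_def by linarith
    qed
  next
    fix i assume "i \<in> {..<c}" hence ic: "i < c" by simp
    hence "mu (c - 1) \<le> mu i" using part_le[OF p, of i "c - 1"] by simp
    moreover have "g (c - 1) < n" using c3 ic by simp
    ultimately show "i \<in> {i. j < mu i}" using ic jpos unfolding g_def j_def by simp
  qed
  have "conjp mu j = c" unfolding conjp_def eq by simp
  hence "n = int (conjp mu j) - int j" using jpos unfolding j_def by simp
  thus "n \<in> ketV (conjp mu)" unfolding ketV_def by auto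
qed

lemma VIdx_ketV:
  assumes p: "partition lam" shows "VIdx (ketV lam)"
proof -
  from p obtain N where N: "\<forall>i\<ge>N. lam i = 0" and d: "\<And>i. lam (Suc i) \<le> lam i"
    unfolding partition_def by blast
  have "\<forall>i. int (lam (Suc i)) - int (Suc i) < int (lam i) - int i"
  proof
    fix i show "int (lam (Suc i)) - int (Suc i) < int (lam i) - int i" using d[of i] by linarith
  qed
  moreover have "\<forall>i\<ge>N. int (lam i) - int i = - int i" using N by simp
  ultimately show ?thesis unfolding VIdx_def ketV_def
    by (intro exI[of _ "\<lambda>i. int (lam i) - int i"]) blast
qed


lemma VIdx_part:
  assumes "VIdx S" shows "\<exists>lam. partition lam \<and> S = ketV lam"
proof -
  from assms obtain f N where d: "\<And>i. f (Suc i) < f i" and N: "\<forall>i\<ge>N. f i = - int i"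
    and S: "S = range f" unfolding VIdx_def by blast
  define h where "h i = f i + int i" for i
  have hd: "\<And>i. h (Suc i) \<le> h i" unfolding h_def using d by (smt (verit) of_nat_Suc)
  have h0: "\<And>i. i \<ge> N \<Longrightarrow> h i = 0" unfolding h_def using N by simp
  have hpos: "\<And>i. h i \<ge> 0"
  proof -
    fix i have "h (max i N) \<le> h i" using anti_le[of h, OF hd] by simp
    thus "h i \<ge> 0" using h0[of "max i N"] by simp
  qed
  define lam where "lam i = nat (h i)" for i
  have "partition lam" unfolding partition_def lam_def
    using hd h0 by (metis nat_0 nat_mono)
  moreover have "S = ketV lam" unfolding S ketV_def lam_def
    using hpos by (simp add: h_def)
  ultimately show ?thesis by blast
qed

lemma WIdx_ketW:
  assumes p: "partition lam" shows "WIdx (ketW lam)"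
proof -
  from partition_conjp[OF p] obtain N where N: "\<forall>i\<ge>N. conjp lam i = 0"
    and d: "\<And>i. conjp lam (Suc i) \<le> conjp lam i" unfolding partition_def by blast
  have "\<forall>i. int i + 1 - int (conjp lam i) < int (Suc i) + 1 - int (conjp lam (Suc i))"
  proof
    fix i show "int i + 1 - int (conjp lam i) < int (Suc i) + 1 - int (conjp lam (Suc i))"
      using d[of i] by linarith
  qed
  moreover have "\<forall>i\<ge>N. int i + 1 - int (conjp lam i) = int i + 1" using N by simp
  ultimately show ?thesis unfolding WIdx_def ketW_def
    by (intro exI[of _ "\<lambda>i. int i + 1 - int (conjp lam i)"]) blast
qed

lemma VIdx_WIdx: "VIdx S \<Longrightarrow> WIdx (- S)"
  using VIdx_part ketW_compl WIdx_ketW by metis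

lemma WIdx_VIdx:
  assumes "WIdx T" shows "VIdx (- T)"
proof -
  from assms obtain f N where d: "\<And>i. f i < f (Suc i)" and N: "\<forall>i\<ge>N. f i = int i + 1"
    and T: "T = range f" unfolding WIdx_def by blast
  define h where "h i = int i + 1 - f i" for i
  have hd: "\<And>i. h (Suc i) \<le> h i" unfolding h_def using d by (smt (verit) of_nat_Suc)
  have h0: "\<And>i. i \<ge> N \<Longrightarrow> h i = 0" unfolding h_def using N by simp
  have hpos: "\<And>i. h i \<ge> 0"
  proof -
    fix i have "h (max i N) \<le> h i" using anti_le[of h, OF hd] by simp
    thus "h i \<ge> 0" using h0[of "max i N"] by simp
  qed
  define mu where "mu i = nat (h i)" for i
  have p: "partition mu" unfolding partition_def mu_def
    using hd h0 by (metis nat_0 nat_mono)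
  have "T = range (\<lambda>i. int i + 1 - int (mu i))" unfolding T mu_def
    using hpos by (simp add: h_def)
  hence "- T = ketV (conjp mu)" using ketV_conj_compl[OF p] by simp
  thus ?thesis using VIdx_ketV partition_conjp p by simp
qed

lemma range_upd: "inj f \<Longrightarrow> range (f(i:=x)) = insert x (range f - {f i})"
  by (auto simp: inj_eq image_iff)

lemma VIdx_down:
  assumes "VIdx S" "a + 1 \<in> S" "a \<notin> S"
  shows "VIdx (insert a (S - {a + 1}))"
proof -
  from assms(1) obtain f N where d: "\<And>i. f (Suc i) < f i" and N: "\<forall>i\<ge>N. f i = - int i"
    and S: "S = range f" unfolding VIdx_def by blast
  from assms(2) S obtain i where i: "f i = a + 1" by auto
  have fa: "\<And>k. f k \<noteq> a" using assms(3) S by auto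
  have iN: "i < N"
  proof (rule ccontr)
    assume "\<not> i < N"
    hence "f (Suc i) = a" using N i by auto
    thus False using fa by blast
  qed
  define g where "g = f(i := a)"
  have "\<forall>k. g (Suc k) < g k"
  proof
    fix k
    show "g (Suc k) < g k"
    proof (cases "k = i")
      case True thus ?thesis unfolding g_def using d[of i] fa[of "Suc i"] i by auto
    next
      case False
      show ?thesis
      proof (cases "Suc k = i")
        case True thus ?thesis unfolding g_def using d[of k] i by auto
      next
        case False2: False
        thus ?thesis unfolding g_def using d[of k] False by auto
      qed
    qed
  qed
  moreover have "\<forall>k\<ge>N. g k = - int k" using N iN unfolding g_def by auto
  moreover have "insert a (S - {a + 1}) = range g"
    unfolding g_def S using range_upd[OF anti_inj[of f, OF d], of i a] i by simp
  ultimately show ?thesis unfolding VIdx_def by blast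
qed

lemma VIdx_up:
  assumes "VIdx S" "a \<in> S" "a + 1 \<notin> S"
  shows "VIdx (insert (a + 1) (S - {a}))"
proof -
  from assms(1) obtain f N where d: "\<And>i. f (Suc i) < f i" and N: "\<forall>i\<ge>N. f i = - int i"
    and S: "S = range f" unfolding VIdx_def by blast
  from assms(2) S obtain i where i: "f i = a" by auto
  have fa: "\<And>k. f k \<noteq> a + 1" using assms(3) S by (metis rangeI)
  define g where "g = f(i := a + 1)"
  have "\<forall>k. g (Suc k) < g k"
  proof
    fix k
    show "g (Suc k) < g k"
    proof (cases "k = i")
      case True thus ?thesis unfolding g_def using d[of i] i by auto
    next
      case False
      show ?thesis
      proof (cases "Suc k = i")
        case True thus ?thesis unfolding g_def using d[of k] i fa[of k] by auto
      next
        case False2: False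
        thus ?thesis unfolding g_def using d[of k] False by auto
      qed
    qed
  qed
  moreover have "\<forall>k\<ge>max N (Suc i). g k = - int k" using N unfolding g_def by auto
  moreover have "insert (a + 1) (S - {a}) = range g"
    unfolding g_def S using range_upd[OF anti_inj[of f, OF d], of i "a + 1"] i by simp
  ultimately show ?thesis unfolding VIdx_def by blast
qed


definition Dm :: "(int set \<Rightarrow> Qq) \<Rightarrow> (int set \<Rightarrow> Qq)" where
  "Dm x = (\<lambda>T. x (- T))"

lemma supp_Dm: "{T. Dm x T \<noteq> 0} = uminus -` {S. x S \<noteq> 0}"
  unfolding Dm_def by auto

lemma inj_compl: "inj (uminus :: int set \<Rightarrow> int set)" by (simp add: inj_def)

lemma Dm_LV: assumes "x \<in> LV" shows "Dm x \<in> LW"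
proof -
  have "finite {T. Dm x T \<noteq> 0}" unfolding supp_Dm
    using assms unfolding LV_def by (blast intro: finite_vimageI inj_compl)
  moreover have "WIdx T" if "Dm x T \<noteq> 0" for T
    using that assms VIdx_WIdx[of "- T"] unfolding LV_def Dm_def by auto
  ultimately show ?thesis unfolding LW_def by blast
qed

lemma Dm_LW: assumes "w \<in> LW" shows "Dm w \<in> LV"
proof -
  have "finite {T. Dm w T \<noteq> 0}" unfolding supp_Dm
    using assms unfolding LW_def by (blast intro: finite_vimageI inj_compl)
  moreover have "VIdx T" if "Dm w T \<noteq> 0" for T
    using that assms WIdx_VIdx[of "- T"] unfolding LW_def Dm_def by auto
  ultimately show ?thesis unfolding LV_def by blast
qed

lemma Dm_Dm: "Dm (Dm x) = x" unfolding Dm_def by simp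

lemma bvec_Dm: "partition lam \<Longrightarrow> Dm (bvec (ketV lam)) = bvec (ketW lam)"
  unfolding Dm_def bvec_def using ketW_compl[of lam] by (auto intro!: ext)

lemma is_C_Dm: "is_C Dm"
  unfolding is_C_def using Dm_LV bvec_Dm by (auto simp: Dm_def)

lemma bvec_LV: "VIdx S \<Longrightarrow> (\<lambda>T. c * bvec S T) \<in> LV"
proof -
  assume "VIdx S"
  have "{T. c * bvec S T \<noteq> 0} \<subseteq> {S}" unfolding bvec_def by auto
  thus ?thesis unfolding LV_def using \<open>VIdx S\<close> finite_subset unfolding bvec_def by fastforce
qed

lemma C_eq_Dm:
  assumes C: "is_C C" and x: "x \<in> LV"
  shows "C x = Dm x"
proof -
  have lin1: "\<And>x y. x \<in> LV \<Longrightarrow> y \<in> LV \<Longrightarrow> C (\<lambda>S. x S + y S) = (\<lambda>T. C x T + C y T)"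
    and lin2: "\<And>c x. x \<in> LV \<Longrightarrow> C (\<lambda>S. c * x S) = (\<lambda>T. c * C x T)"
    and bas: "\<And>lam. partition lam \<Longrightarrow> C (bvec (ketV lam)) = bvec (ketW lam)"
    using C unfolding is_C_def by blast+
  have z: "(\<lambda>_. 0) \<in> LV" unfolding LV_def by simp
  have C0: "C (\<lambda>_. 0) = (\<lambda>_. 0)" using lin2[OF z, of 0] by simp
  have bv: "VIdx S \<Longrightarrow> C (bvec S) = Dm (bvec S)" for S
    using VIdx_part[of S] bas bvec_Dm by metis
  have bvL: "VIdx S \<Longrightarrow> bvec S \<in> LV" for S using bvec_LV[of S 1] by simp
  have main: "\<forall>x. x \<in> LV \<longrightarrow> {S. x S \<noteq> 0} = F \<longrightarrow> C x = Dm x" if fin: "finite F" for F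
    using fin
  proof (induction F rule: finite_induct)
    case empty
    show ?case
    proof (intro allI impI)
      fix x :: "int set \<Rightarrow> Qq" assume "{S. x S \<noteq> 0} = {}"
      hence "x = (\<lambda>_. 0)" by auto
      then show "C x = Dm x" using C0 by (auto simp: Dm_def)
    qed
  next
    case (insert S F)
    show ?case
    proof (intro allI impI)
    fix x :: "int set \<Rightarrow> Qq" assume pr: "x \<in> LV" "{S. x S \<noteq> 0} = insert S F"
    from pr have xS: "x S \<noteq> 0" and vS: "VIdx S" unfolding LV_def by auto
    define y where "y = x(S := 0)"
    have yL: "y \<in> LV" using pr unfolding LV_def y_def
      by (auto intro: finite_subset[of _ "{S. x S \<noteq> 0}"])
    have ysupp: "{T. y T \<noteq> 0} = F" using pr insert.hyps unfolding y_def by auto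
    have yC: "C y = Dm y" using insert.IH yL ysupp by blast
    define z where "z = (\<lambda>T. x S * bvec S T)"
    have zL: "z \<in> LV" unfolding z_def using bvec_LV[OF vS] .
    have zC: "C z = (\<lambda>T. x S * Dm (bvec S) T)" unfolding z_def using lin2[OF bvL[OF vS]] bv[OF vS] by simp
    have xe: "x = (\<lambda>T. y T + z T)" unfolding y_def z_def bvec_def by auto
    have "C x = (\<lambda>T. C y T + C z T)" using lin1[OF yL zL] xe by simp
    also have "\<dots> = Dm x" unfolding yC zC by (auto simp: Dm_def y_def bvec_def intro!: ext)
    finally show "C x = Dm x" .
    qed
  qed
  show ?thesis using main x unfolding LV_def by blast
qed

lemma EV_LV: assumes "x \<in> LV" shows "EV a x \<in> LV"
proof -
  have sub: "{T. EV a x T \<noteq> 0} \<subseteq> (\<lambda>S. insert a (S - {a + 1})) ` {S. x S \<noteq> 0}"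
  proof
    fix T assume "T \<in> {T. EV a x T \<noteq> 0}"
    hence h: "a \<in> T" "a + 1 \<notin> T" "x (insert (a + 1) (T - {a})) \<noteq> 0" unfolding EV_def by (auto split: if_splits)
    have eq: "insert a (insert (a + 1) (T - {a}) - {a + 1}) = T" using h by auto
    thus "T \<in> (\<lambda>S. insert a (S - {a + 1})) ` {S. x S \<noteq> 0}" using h(3) by blast
  qed
  have "VIdx T" if "EV a x T \<noteq> 0" for T
  proof -
    from that have h: "a \<in> T" "a + 1 \<notin> T" "x (insert (a + 1) (T - {a})) \<noteq> 0" unfolding EV_def by (auto split: if_splits)
    have v: "VIdx (insert (a + 1) (T - {a}))" using h(3) assms unfolding LV_def by blast
    have eq: "insert a (insert (a + 1) (T - {a}) - {a + 1}) = T" using h by auto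
    have m1: "a + 1 \<in> insert (a + 1) (T - {a})" by simp
    have m2: "a \<notin> insert (a + 1) (T - {a})" by simp
    have "VIdx (insert a (insert (a + 1) (T - {a}) - {a + 1}))" using VIdx_down[OF v m1 m2] .
    thus ?thesis by (simp only: eq)
  qed
  moreover have "finite {T. EV a x T \<noteq> 0}"
  proof -
    have "finite {S. x S \<noteq> 0}" using assms unfolding LV_def by simp
    hence "finite ((\<lambda>S. insert a (S - {a + 1})) ` {S. x S \<noteq> 0})" by (rule finite_imageI)
    thus ?thesis by (rule finite_subset[OF sub])
  qed
  ultimately show ?thesis unfolding LV_def by blast
qed

lemma FV_LV: assumes "x \<in> LV" shows "FV a x \<in> LV"
proof -
  have sub: "{T. FV a x T \<noteq> 0} \<subseteq> (\<lambda>S. insert (a + 1) (S - {a})) ` {S. x S \<noteq> 0}"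
  proof
    fix T assume "T \<in> {T. FV a x T \<noteq> 0}"
    hence h: "a + 1 \<in> T" "a \<notin> T" "x (insert a (T - {a + 1})) \<noteq> 0" unfolding FV_def by (auto split: if_splits)
    have eq: "insert (a + 1) (insert a (T - {a + 1}) - {a}) = T" using h by auto
    thus "T \<in> (\<lambda>S. insert (a + 1) (S - {a})) ` {S. x S \<noteq> 0}" using h(3) by blast
  qed
  have "VIdx T" if "FV a x T \<noteq> 0" for T
  proof -
    from that have h: "a + 1 \<in> T" "a \<notin> T" "x (insert a (T - {a + 1})) \<noteq> 0" unfolding FV_def by (auto split: if_splits)
    have v: "VIdx (insert a (T - {a + 1}))" using h(3) assms unfolding LV_def by blast
    have eq: "insert (a + 1) (insert a (T - {a + 1}) - {a}) = T" using h by auto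
    have m1: "a \<in> insert a (T - {a + 1})" by simp
    have m2: "a + 1 \<notin> insert a (T - {a + 1})" by simp
    have "VIdx (insert (a + 1) (insert a (T - {a + 1}) - {a}))" using VIdx_up[OF v m1 m2] .
    thus ?thesis by (simp only: eq)
  qed
  moreover have "finite {T. FV a x T \<noteq> 0}"
  proof -
    have "finite {S. x S \<noteq> 0}" using assms unfolding LV_def by simp
    hence "finite ((\<lambda>S. insert (a + 1) (S - {a})) ` {S. x S \<noteq> 0})" by (rule finite_imageI)
    thus ?thesis by (rule finite_subset[OF sub])
  qed
  ultimately show ?thesis unfolding LV_def by blast
qed

lemma KV_LV: assumes "x \<in> LV" shows "KV a x \<in> LV" "KinvV a x \<in> LV"
proof -
  have "{T. KV a x T \<noteq> 0} \<subseteq> {T. x T \<noteq> 0}" "{T. KinvV a x T \<noteq> 0} \<subseteq> {T. x T \<noteq> 0}"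
    unfolding KV_def KinvV_def by auto
  thus "KV a x \<in> LV" "KinvV a x \<in> LV" using assms unfolding LV_def
    by (auto intro: finite_subset simp: KV_def KinvV_def)
qed

lemma ind_not: "ind (\<not> P) = 1 - ind P" unfolding ind_def by simp

theorem theorem6p3:
  shows "(\<exists>C. is_C C) \<and> (\<forall>C. is_C C \<longrightarrow> U_iso C)"
proof (intro conjI allI impI)
  show "\<exists>C. is_C C" using is_C_Dm by blast
next
  fix C assume C: "is_C C"
  have CD: "\<And>x. x \<in> LV \<Longrightarrow> C x = Dm x" using C_eq_Dm[OF C] .
  have bij: "bij_betw C LV LW"
    unfolding bij_betw_def
  proof
    show "inj_on C LV"
    proof (rule inj_onI)
      fix x y assume "x \<in> LV" "y \<in> LV" "C x = C y"
      hence "Dm (Dm x) = Dm (Dm y)" using CD by simp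
      thus "x = y" by (simp add: Dm_Dm)
    qed
    show "C ` LV = LW"
    proof
      show "C ` LV \<subseteq> LW" using C unfolding is_C_def by blast
      show "LW \<subseteq> C ` LV"
      proof
        fix w assume "w \<in> LW"
        hence "Dm w \<in> LV" "C (Dm w) = w" using Dm_LW CD Dm_Dm by auto
        thus "w \<in> C ` LV" by (metis imageI)
      qed
    qed
  qed
  have E: "\<forall>a. \<forall>x\<in>LV. C (EV a x) = EW a (C x)"
  proof (intro allI ballI)
    fix a :: int and x assume x: "x \<in> LV"
    have s: "\<And>T. a + 1 \<in> T \<Longrightarrow> a \<notin> T \<Longrightarrow> - insert a (T - {a + 1}) = insert (a + 1) (- T - {a})" by auto
    show "C (EV a x) = EW a (C x)" unfolding CD[OF EV_LV[OF x]] CD[OF x]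
      unfolding Dm_def EV_def EW_def by (rule ext) (simp add: s)
  qed
  have F: "\<forall>a. \<forall>x\<in>LV. C (FV a x) = FW a (C x)"
  proof (intro allI ballI)
    fix a :: int and x assume x: "x \<in> LV"
    have s: "\<And>T. a \<in> T \<Longrightarrow> a + 1 \<notin> T \<Longrightarrow> - insert (a + 1) (T - {a}) = insert a (- T - {a + 1})" by auto
    show "C (FV a x) = FW a (C x)" unfolding CD[OF FV_LV[OF x]] CD[OF x]
      unfolding Dm_def FV_def FW_def by (rule ext) (simp add: s)
  qed
  have K: "\<forall>a. \<forall>x\<in>LV. C (KV a x) = KW a (C x)"
  proof (intro allI ballI)
    fix a :: int and x assume x: "x \<in> LV"
    show "C (KV a x) = KW a (C x)" unfolding CD[OF KV_LV(1)[OF x]] CD[OF x]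
      unfolding Dm_def KV_def KW_def by (rule ext) (simp add: ind_def)
  qed
  have Ki: "\<forall>a. \<forall>x\<in>LV. C (KinvV a x) = KinvW a (C x)"
  proof (intro allI ballI)
    fix a :: int and x assume x: "x \<in> LV"
    show "C (KinvV a x) = KinvW a (C x)" unfolding CD[OF KV_LV(2)[OF x]] CD[OF x]
      unfolding Dm_def KinvV_def KinvW_def by (rule ext) (simp add: ind_def)
  qed
  show "U_iso C" unfolding U_iso_def using bij E F K Ki by blast
qed

end
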